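(* For all $b,b'\in\mathbb F_{3^{2m}}$, the vector $(\mathrm{Tr}_{2m}(bt)\,\mathrm{Tr}_{2m}(b't))_{t\in\mathbb F_{3^{2m}}}$ belongs to $\mathcal C_3(\mathbb D_d)$.
   Context: Let $m\ge 2$ be an integer. For $s\in\{m,2m\}$ let $\mathrm{Tr}_s:\mathbb F_{3^s}\to\mathbb F_3$ denote the absolute trace. Vectors in $\mathbb F_3^{3^{2m}}$ are indexed by $\mathbb F_{3^{2m}}$, and a function $f:\mathbb F_{3^{2m}}\to\mathbb F_3$ is identified with $(f(t))_{t\in\mathbb F_{3^{2m}}}$. Let $\mathcal C(2m,3)=\{(\mathrm{Tr}_{2m}(at^{3^m+1}+bt)+h)_{t\in\mathbb F_{3^{2m}}}: a\in\mathbb F_{3^m}, b\in\mathbb F_{3^{2m}}, h\in\mathbb F_3\}$, let $d$ be its minimum nonzero Hamming weight, let $\mathbb D_d$ be the incidence structure on $\mathbb F_{3^{2m}}$ whose blocks are the supports of the weight-$d$ codewords, and let $\mathcal C_3(\mathbb D_d)$ be the $\mathbb F_3$-span of the incidence vectors of the blocks (entry $1$ on the block, $0$ elsewhere). *)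

theory Defs
  imports Main
begin

text \<open>The ambient field F_{3^{2m}} is a type 'a of class field/finite with
CARD('a) = 3^(2m). Vectors in F_3^{3^{2m}} are functions 'a \<Rightarrow> 'a with values in F_3.\<close>

definition F3 :: "'a::field set" where
  "F3 = {x. x ^ 3 = x}"

definition subfield_m :: "nat \<Rightarrow> 'a::field set" where
  "subfield_m m = {x. x ^ (3 ^ m) = x}"

definition tr :: "nat \<Rightarrow> 'a::field \<Rightarrow> 'a" where
  "tr s x = (\<Sum>i<s. x ^ (3 ^ i))"

definition code_C :: "nat \<Rightarrow> ('a::field \<Rightarrow> 'a) set" where
  "code_C m = {(\<lambda>t. tr (2*m) (a * t ^ (3 ^ m + 1) + b * t) + h) | a b h.
                 a \<in> subfield_m m \<and> h \<in> F3}"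

definition hweight :: "('a::finite \<Rightarrow> 'b::zero) \<Rightarrow> nat" where
  "hweight c = card {t. c t \<noteq> 0}"

definition code_d :: "('a::{field,finite} \<Rightarrow> 'a) set \<Rightarrow> nat" where
  "code_d C = Min {hweight c | c. c \<in> C \<and> c \<noteq> (\<lambda>_. 0)}"

definition blocks_D :: "nat \<Rightarrow> 'a::{field,finite} set set" where
  "blocks_D m = (\<lambda>c :: 'a \<Rightarrow> 'a. {t. c t \<noteq> 0}) ` {c. c \<in> code_C m \<and> hweight c = code_d (code_C m :: ('a \<Rightarrow> 'a) set)}"

definition code_of_design :: "'a::{field,finite} set set \<Rightarrow> ('a \<Rightarrow> 'a) set" where
  "code_of_design Bs = {(\<lambda>t. \<Sum>B\<in>Bs. lam B * (if t \<in> B then 1 else 0)) | lam.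
                          \<forall>B. lam B \<in> F3}"

end

theory Submission
  imports Defs "HOL-Computational_Algebra.Polynomial"
begin


locale ff =
  fixes m :: nat and T :: "'a::{field,finite} itself"
  assumes m2: "m \<ge> 2" and cardA: "card (UNIV :: 'a set) = 3 ^ (2 * m)"
begin

lemma three0: "(3::'a) = 0"
proof -
  have "(\<Sum>y\<in>(UNIV::'a set). y) = (\<Sum>y\<in>UNIV. 1 + y)"
    by (rule sum.reindex_bij_witness[of _ "\<lambda>y. 1 + y" "\<lambda>y. y - 1"]) auto
  hence "of_nat (card (UNIV::'a set)) * (1::'a) = 0"
    by (simp add: sum.distrib)
  hence "(of_nat 3 :: 'a) ^ (2*m) = 0" by (simp add: cardA of_nat_power)
  thus ?thesis by simp
qed

lemma two: "(2::'a) = -1"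
  using three0 by (simp add: eq_neg_iff_add_eq_0) 

lemma mtwo: "(-2::'a) = 1"
  using two by simp

lemma four: "(4::'a) = 1"
proof -
  have "(4::'a) = 3 + 1" by simp
  thus ?thesis using three0 by simp
qed

lemma frob3: "((x::'a)+y)^3 = x^3 + y^3"
proof -
  have "(x+y)^3 = x^3 + y^3 + 3*(x^2*y + x*y^2)"
    by (simp add: power3_eq_cube power2_eq_square algebra_simps)
  thus ?thesis using three0 by simp
qed

lemma frobk: "((x::'a)+y)^(3^k) = x^(3^k) + y^(3^k)"
proof (induction k)
  case (Suc k)
  have "(x+y)^(3^Suc k) = ((x+y)^(3^k))^3" by (simp add: power_mult[symmetric] mult.commute)
  also have "\<dots> = (x^(3^k))^3 + (y^(3^k))^3" using Suc frob3 by simp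
  finally show ?case by (simp add: power_mult[symmetric] mult.commute)
qed simp

lemma negk: "(-(x::'a))^(3^k) = - (x^(3^k))"
  by (simp add: power_minus_odd)

lemma diffk: "((x::'a)-y)^(3^k) = x^(3^k) - y^(3^k)"
  using frobk[of x "-y" k] negk[of y k] by simp

lemma fermat: "(x::'a)^(3^(2*m)) = x"
proof (cases "x = 0")
  case True thus ?thesis by simp
next
  case False
  let ?U = "UNIV - {0::'a}"
  have "(\<Prod>y\<in>?U. y) = (\<Prod>y\<in>?U. x * y)"
    by (rule prod.reindex_bij_witness[of _ "\<lambda>y. x * y" "\<lambda>y. y / x"]) (use False in auto)
  also have "\<dots> = x ^ card ?U * (\<Prod>y\<in>?U. y)" by (simp add: prod.distrib)
  finally have "x ^ card ?U = 1"
    by (metis (no_types, lifting) DiffD2 finite mult_cancel_right1 prod_zero_iff singletonI)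
  moreover have "card ?U = 3^(2*m) - 1" using cardA by (simp add: card_Diff_singleton)
  ultimately have "x^(3^(2*m) - 1) = 1" by simp
  hence "x * x^(3^(2*m) - 1) = x" by simp
  thus ?thesis by (metis One_nat_def Suc_pred' power_Suc zero_less_numeral zero_less_power)
qed

abbreviation "q \<equiv> (3::nat)^m"

lemma qq: "q * q = 3^(2*m)" by (simp add: power_add[symmetric] mult_2)

lemma fermat_q: "((x::'a)^q)^q = x"
  using fermat[of x] qq by (simp add: power_mult[symmetric])

lemma q_ge: "q \<ge> 9"
proof -
  have "(3::nat)^2 \<le> 3^m" using m2 by (intro power_increasing) auto
  thus ?thesis by simp
qed

end

context ff begin

abbreviation "TR \<equiv> (tr (2*m) :: 'a \<Rightarrow> 'a)"

lemma tr_add: "TR (x + y) = TR x + TR y"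
  by (simp add: tr_def frobk sum.distrib)

lemma tr_neg: "TR (- x) = - TR x"
  by (simp add: tr_def negk sum_negf)

lemma tr_diff: "TR (x - y) = TR x - TR y"
  using tr_add[of x "-y"] tr_neg[of y] by simp

lemma tr_zero: "TR 0 = 0"
  by (simp add: tr_def power_0_left)

lemma tr_cube: "TR (x^3) = TR x"
proof -
  have "TR (x^3) = (\<Sum>i<2*m. x^(3^Suc i))"
    unfolding tr_def by (simp add: power_mult[symmetric] mult.commute)
  also have "\<dots> + x^(3^0) = (\<Sum>i<Suc (2*m). x^(3^i))"
    by (simp only: sum.lessThan_Suc_shift add.commute)
  also have "\<dots> = TR x + x^(3^(2*m))" by (simp only: sum.lessThan_Suc tr_def)
  finally show ?thesis using fermat[of x] by simp
qed

lemma tr_powk: "TR (x^(3^k)) = TR x"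
proof (induction k)
  case (Suc k)
  have "x^(3^Suc k) = (x^(3^k))^3" by (simp add: power_mult[symmetric] mult.commute)
  thus ?case using Suc tr_cube by simp
qed simp

lemma tr_powq: "TR (x^q) = TR x" by (rule tr_powk)

lemma F3_iff: "(x::'a) \<in> F3 \<longleftrightarrow> x = 0 \<or> x = 1 \<or> x = -1"
proof -
  have "x^3 - x = x * (x - 1) * (x + 1)" by (simp add: power3_eq_cube algebra_simps)
  thus ?thesis unfolding F3_def
    by (auto simp: power3_eq_cube eq_neg_iff_add_eq_0)
qed

lemma F3_add: "x \<in> F3 \<Longrightarrow> y \<in> F3 \<Longrightarrow> (x::'a) + y \<in> F3"
  using two mtwo by (auto simp: F3_iff)
lemma F3_mult: "x \<in> F3 \<Longrightarrow> y \<in> F3 \<Longrightarrow> (x::'a) * y \<in> F3"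
  by (auto simp: F3_iff)
lemma F3_neg: "x \<in> F3 \<Longrightarrow> - (x::'a) \<in> F3"
  by (auto simp: F3_iff)
lemma F3_diff: "x \<in> F3 \<Longrightarrow> y \<in> F3 \<Longrightarrow> (x::'a) - y \<in> F3"
  using F3_add[of x "-y"] F3_neg[of y] by simp
lemma F3_0: "(0::'a) \<in> F3" and F3_1: "(1::'a) \<in> F3" and F3_m1: "(-1::'a) \<in> F3"
  by (auto simp: F3_iff)
lemma F3_sq: "x \<in> F3 \<Longrightarrow> (x::'a) \<noteq> 0 \<Longrightarrow> x * x = 1"
  by (auto simp: F3_iff)
lemma F3_sq': "x \<in> F3 \<Longrightarrow> (x::'a) * x = (if x = 0 then 0 else 1)"
  by (auto simp: F3_iff)

lemma F3_powk: "x \<in> F3 \<Longrightarrow> (x::'a)^(3^k) = x"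
  by (auto simp: F3_iff power_minus_odd)


lemma sum_cube: "(\<Sum>i<(n::nat). (f i :: 'a))^3 = (\<Sum>i<n. (f i)^3)"
  by (induction n) (simp_all add: frob3)

lemma tr_F3: "TR x \<in> F3"
proof -
  have "(TR x)^3 = (\<Sum>i<2*m. (x^(3^i))^3)" unfolding tr_def by (rule sum_cube)
  also have "\<dots> = (\<Sum>i<2*m. (x^3)^(3^i))"
    by (simp add: power_mult[symmetric] mult.commute)
  also have "\<dots> = TR x" using tr_cube by (simp add: tr_def)
  finally show ?thesis by (simp add: F3_def)
qed

lemma tr_scal: "c \<in> F3 \<Longrightarrow> TR (c * x) = c * TR x"
  by (simp add: tr_def power_mult_distrib F3_powk sum_distrib_left)

lemma two_ne0: "(2::'a) \<noteq> 0"
proof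
  assume h: "(2::'a) = 0"
  have "(3::'a) = 2 + 1" by simp
  with h have "(3::'a) = 1" by simp
  with three0 show False by simp
qed

lemma Fq_mult: "x \<in> subfield_m m \<Longrightarrow> y \<in> subfield_m m \<Longrightarrow> (x::'a) * y \<in> subfield_m m"
  by (simp add: subfield_m_def power_mult_distrib)
lemma Fq_add: "x \<in> subfield_m m \<Longrightarrow> y \<in> subfield_m m \<Longrightarrow> (x::'a) + y \<in> subfield_m m"
  by (simp add: subfield_m_def frobk)
lemma Fq_neg: "x \<in> subfield_m m \<Longrightarrow> - (x::'a) \<in> subfield_m m"
  by (simp add: subfield_m_def negk)
lemma Fq_div: "x \<in> subfield_m m \<Longrightarrow> y \<in> subfield_m m \<Longrightarrow> (x::'a) / y \<in> subfield_m m"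
  by (simp add: subfield_m_def power_divide)
lemma F3_Fq: "x \<in> F3 \<Longrightarrow> (x::'a) \<in> subfield_m m"
  by (simp add: subfield_m_def F3_powk)
lemma norm_Fq: "(t::'a)^(q+1) \<in> subfield_m m"
proof -
  have "(t^(q+1))^q = (t^q)^q * t^q" by (simp add: power_mult_distrib power_add power_mult[symmetric] mult.commute)
  thus ?thesis by (simp add: subfield_m_def fermat_q)
qed

end

context ff begin

abbreviation "Bs \<equiv> (blocks_D m :: 'a set set)"
abbreviation "S \<equiv> code_of_design Bs"
abbreviation "CC \<equiv> (code_C m :: ('a \<Rightarrow> 'a) set)"

lemma S_zero: "(\<lambda>t. 0) \<in> S"
  unfolding code_of_design_def
  by (rule CollectI, rule exI[of _ "\<lambda>_. 0"]) (auto simp: F3_0)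

lemma S_add: assumes "f \<in> S" "g \<in> S" shows "(\<lambda>t. f t + g t) \<in> S"
proof -
  from assms obtain l1 l2 where l1: "f = (\<lambda>t. \<Sum>B\<in>Bs. l1 B * (if t \<in> B then 1 else 0))" "\<forall>B. l1 B \<in> F3"
    and l2: "g = (\<lambda>t. \<Sum>B\<in>Bs. l2 B * (if t \<in> B then 1 else 0))" "\<forall>B. l2 B \<in> F3"
    unfolding code_of_design_def by blast
  show ?thesis unfolding code_of_design_def
    apply (rule CollectI, rule exI[of _ "\<lambda>B. l1 B + l2 B"])
    using l1 l2 by (auto simp: F3_add sum.distrib distrib_right)
qed

lemma S_scal: assumes "f \<in> S" "c \<in> F3" shows "(\<lambda>t. c * f t) \<in> S"
proof -
  from assms obtain l1 where l1: "f = (\<lambda>t. \<Sum>B\<in>Bs. l1 B * (if t \<in> B then 1 else 0))" "\<forall>B. l1 B \<in> F3"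
    unfolding code_of_design_def by blast
  show ?thesis unfolding code_of_design_def
    apply (rule CollectI, rule exI[of _ "\<lambda>B. c * l1 B"])
    using l1 assms(2) by (auto simp: F3_mult sum_distrib_left mult.assoc)
qed

lemma S_lin: assumes "f \<in> S" "g \<in> S" "c \<in> F3" shows "(\<lambda>t. f t + c * g t) \<in> S"
  using S_add[OF assms(1) S_scal[OF assms(2,3)]] .

lemma S_cong: "f \<in> S \<Longrightarrow> (\<And>t. f t = g t) \<Longrightarrow> g \<in> S"
proof -
  assume "f \<in> S" "\<And>t. f t = g t"
  hence "f = g" by auto
  thus "g \<in> S" using \<open>f \<in> S\<close> by simp
qed

lemma S_block: assumes "B \<in> Bs" shows "(\<lambda>t. if t \<in> B then 1 else 0) \<in> S"
proof -
  have fin: "finite Bs" by simp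
  have h: "(\<lambda>t. \<Sum>B'\<in>Bs. (if B' = B then 1 else 0) * (if t \<in> B' then (1::'a) else 0)) = (\<lambda>t. if t \<in> B then 1 else 0)"
  proof
    fix t
    have "(\<Sum>B'\<in>Bs. (if B' = B then 1 else 0) * (if t \<in> B' then (1::'a) else 0)) = (\<Sum>B'\<in>Bs. if B' = B then (if t \<in> B' then 1 else 0) else 0)"
      by (rule sum.cong) auto
    also have "\<dots> = (if t \<in> B then 1 else 0)" using sum.delta[OF fin, of B "\<lambda>B'. if t \<in> B' then (1::'a) else 0"] assms by simp
    finally show "(\<Sum>B'\<in>Bs. (if B' = B then 1 else 0) * (if t \<in> B' then (1::'a) else 0)) = (if t \<in> B then 1 else 0)" .
  qed
  show ?thesis unfolding code_of_design_def
    apply (rule CollectI, rule exI[of _ "\<lambda>B'. if B' = B then 1 else 0"])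
    using h by (auto simp: F3_0 F3_1)
qed

lemma CC_iff: "g \<in> CC \<longleftrightarrow> (\<exists>a b h. g = (\<lambda>t. TR (a * t^(q+1) + b*t) + h) \<and> a \<in> subfield_m m \<and> h \<in> F3)"
  unfolding code_C_def by blast

lemma CC_F3: "g \<in> CC \<Longrightarrow> g t \<in> F3"
  unfolding CC_iff using tr_F3 F3_add by blast

lemma sq_S: assumes "g \<in> CC" "hweight g = code_d CC" shows "(\<lambda>t. g t * g t) \<in> S"
proof -
  let ?B = "{t. g t \<noteq> 0}"
  have "?B \<in> Bs" unfolding blocks_D_def using assms by blast
  from S_block[OF this] show ?thesis
    by (rule S_cong) (use CC_F3[OF assms(1)] F3_sq' in auto)
qed

lemma K: assumes "a \<in> subfield_m m"
  shows "TR (a*(l*t+s)^(q+1)) = TR (a*l^(q+1)*t^(q+1)) + TR (2*a*l*s^q*t) + TR (a*s^(q+1))"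
proof -
  have aq: "a^q = a" using assms by (simp add: subfield_m_def)
  have e1: "(l*t+s)^(q+1) = (l^q*t^q + s^q)*(l*t+s)"
    by (simp add: frobk power_mult_distrib mult.commute)
  have e: "(l*t+s)^(q+1) = l^(q+1)*t^(q+1) + l^q*s*t^q + s^q*l*t + s^(q+1)"
    unfolding e1 by (simp add: algebra_simps power_add)
  have m: "TR (a*(l^q*s*t^q)) = TR (a*(s^q*l*t))"
  proof -
    have "TR (a*(l^q*s*t^q)) = TR ((a*(l^q*s*t^q))^q)" by (simp add: tr_powq)
    also have "(a*(l^q*s*t^q))^q = a*(s^q*l*t)"
      by (simp add: power_mult_distrib fermat_q aq)
    finally show ?thesis .
  qed
  have h1: "TR (a*(l*t+s)^(q+1)) = TR (a*(l^(q+1)*t^(q+1))) + (TR (a*(l^q*s*t^q)) + TR (a*(s^q*l*t))) + TR (a*s^(q+1))"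
    unfolding e by (simp only: distrib_left tr_add add.assoc)
  have mid: "TR (a*(l^q*s*t^q)) + TR (a*(s^q*l*t)) = TR (2*a*l*s^q*t)"
  proof -
    have "TR (a*(l^q*s*t^q)) + TR (a*(s^q*l*t)) = TR (a*(s^q*l*t)) + TR (a*(s^q*l*t))" by (simp only: m)
    also have "\<dots> = TR (a*(s^q*l*t) + a*(s^q*l*t))" by (simp only: tr_add)
    also have "\<dots> = TR (2*a*l*s^q*t)" by (rule arg_cong[where f=TR]) algebra
    finally show ?thesis .
  qed
  show ?thesis unfolding h1 mid by (simp add: mult.assoc)
qed

lemma hweight_aff: assumes "l \<noteq> 0" shows "hweight (\<lambda>t. g (l*t+s)) = hweight (g::'a\<Rightarrow>'a)"
proof -
  have inj: "inj (\<lambda>t::'a. l*t+s)" using assms by (auto simp: inj_def)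
  have "{t. g (l*t+s) \<noteq> 0} = (\<lambda>t. l*t+s) -` {u. g u \<noteq> 0}" by auto
  moreover have "surj (\<lambda>t::'a. l*t+s)" using finite_UNIV_inj_surj[OF _ inj] by simp
  ultimately show ?thesis unfolding hweight_def using card_vimage_inj[OF inj, of "{u. g u \<noteq> 0}"] by (simp add: vimage_def)
qed

lemma CC_aff: assumes "g \<in> CC" "l \<noteq> 0" shows "(\<lambda>t. g (l*t+s)) \<in> CC"
proof -
  from assms obtain a b h where g: "g = (\<lambda>t. TR (a * t^(q+1) + b*t) + h)" "a \<in> subfield_m m" "h \<in> F3"
    unfolding CC_iff by blast
  have "\<And>t. g (l*t+s) = TR ((a*l^(q+1)) * t^(q+1) + (2*a*l*s^q + b*l)*t) + (TR (a*s^(q+1)) + TR (b*s) + h)"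
  proof -
    fix t
    have 1: "g (l*t+s) = TR (a*(l*t+s)^(q+1)) + TR (b*l*t) + TR (b*s) + h"
      by (simp add: g(1) tr_add distrib_left mult.assoc)
    have 2: "TR((a*l^(q+1))*t^(q+1) + (2*a*l*s^q + b*l)*t) = TR (a*l^(q+1)*t^(q+1)) + TR (2*a*l*s^q*t) + TR (b*l*t)"
      by (simp add: tr_add distrib_right)
    show "g (l*t+s) = TR ((a*l^(q+1)) * t^(q+1) + (2*a*l*s^q + b*l)*t) + (TR (a*s^(q+1)) + TR (b*s) + h)"
      unfolding 1 2 K[OF g(2)] by (simp only: add_ac)
  qed
  moreover have "a*l^(q+1) \<in> subfield_m m" using g(2) norm_Fq Fq_mult by blast
  moreover have "TR (a*s^(q+1)) + TR (b*s) + h \<in> F3" using g(3) tr_F3 F3_add by blast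
  ultimately show ?thesis unfolding CC_iff by blast
qed

definition "MW g \<longleftrightarrow> g \<in> CC \<and> hweight g = code_d CC"

lemma MW_aff: "MW g \<Longrightarrow> l \<noteq> 0 \<Longrightarrow> MW (\<lambda>t. g (l*t+s))"
  unfolding MW_def using CC_aff hweight_aff by auto

lemma MW_sq: "MW g \<Longrightarrow> (\<lambda>t. g t * g t) \<in> S"
  unfolding MW_def using sq_S by auto

lemma min_exists: "\<exists>c0. MW c0 \<and> c0 \<noteq> (\<lambda>_. 0) \<and> (\<forall>g\<in>CC. g \<noteq> (\<lambda>_. 0) \<longrightarrow> code_d CC \<le> hweight g)"
proof -
  let ?W = "{hweight c | c. c \<in> CC \<and> c \<noteq> (\<lambda>_. 0)}"
  have fin: "finite ?W" by simp
  have one: "(\<lambda>t. 1) \<in> CC" unfolding CC_iff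
    by (rule exI[of _ 0], rule exI[of _ 0], rule exI[of _ 1]) (simp add: tr_zero F3_1 subfield_m_def)
  have "(\<lambda>t::'a. (1::'a)) \<noteq> (\<lambda>_. 0)"
  proof
    assume "(\<lambda>t::'a. (1::'a)) = (\<lambda>_. 0)"
    hence "(1::'a) = 0" by (rule fun_cong)
    thus False by simp
  qed
  hence ne: "?W \<noteq> {}" using one by blast
  have "code_d CC \<in> ?W" unfolding code_d_def using Min_in[OF fin ne] .
  then obtain c where "c \<in> CC" "c \<noteq> (\<lambda>_. 0)" "hweight c = code_d CC" by force
  moreover have "\<forall>g\<in>CC. g \<noteq> (\<lambda>_. 0) \<longrightarrow> code_d CC \<le> hweight g"
    unfolding code_d_def using Min_le[OF fin] by blast
  ultimately show ?thesis unfolding MW_def by blast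
qed

end

context ff begin

lemma root_bound: assumes "n \<ge> 1" shows "card {x::'a. x^n = y} \<le> n"
proof -
  let ?p = "monom (1::'a) n + [:-y:]"
  have d: "degree ?p = n"
    using assms by (subst degree_add_eq_left) (auto simp: degree_monom_eq)
  hence nz: "?p \<noteq> 0" using assms by auto
  have "{x::'a. x^n = y} = {x. poly ?p x = 0}" by (auto simp: poly_monom)
  thus ?thesis using card_poly_roots_bound[OF nz] d by simp
qed

definition "Fqs = {y::'a. y \<noteq> 0 \<and> y^q = y}"

lemma q_pos: "q \<ge> 1" using q_ge by simp

lemma card_Fqs: "card Fqs \<le> q - 1"
proof -
  have "Fqs \<subseteq> {y. y^(q-1) = 1}"
  proof
    fix y assume "y \<in> Fqs"
    hence y: "y \<noteq> 0" "y^q = y" by (auto simp: Fqs_def)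
    have "y^q = y^(q-1) * y" using q_pos by (metis Suc_diff_1 power_Suc2 zero_less_one less_le_trans)
    with y show "y \<in> {y. y^(q-1) = 1}" by simp
  qed
  moreover have "card {y::'a. y^(q-1) = 1} \<le> q - 1" using q_ge by (intro root_bound) simp
  ultimately show ?thesis by (meson card_mono finite le_trans)
qed

lemma card_Fq: "card (subfield_m m :: 'a set) \<le> q"
proof -
  have "(subfield_m m :: 'a set) \<subseteq> insert 0 Fqs" by (auto simp: subfield_m_def Fqs_def)
  hence "card (subfield_m m :: 'a set) \<le> card (insert 0 Fqs)" by (intro card_mono) auto
  also have "\<dots> \<le> Suc (card Fqs)" by (simp add: card_insert_le_m1)
  finally show ?thesis using card_Fqs q_pos by linarith
qed

lemma fiber_le: "card {t::'a. t^(q+1) = y} \<le> q + 1"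
  by (rule root_bound) simp

lemma norm_neg1: "\<exists>t::'a. t^(q+1) = -1"
proof -
  let ?N = "\<lambda>t::'a. t^(q+1)"
  let ?Im = "?N ` (UNIV - {0})"
  have sub: "?Im \<subseteq> Fqs"
    using norm_Fq by (auto simp: Fqs_def subfield_m_def)
  have cov: "UNIV - {0} \<subseteq> (\<Union>y\<in>?Im. {t. t^(q+1) = y})" by auto
  have "q*q - 1 = card (UNIV - {0::'a})" using cardA qq by (simp add: card_Diff_singleton)
  also have "\<dots> \<le> card (\<Union>y\<in>?Im. {t. t^(q+1) = y})" by (rule card_mono[OF _ cov]) simp
  also have "\<dots> \<le> (\<Sum>y\<in>?Im. card {t. t^(q+1) = y})" by (rule card_UN_le) simp
  also have "\<dots> \<le> card ?Im * (q+1)" using sum_bounded_above[of ?Im "\<lambda>y. card {t::'a. t^(q+1) = y}" "q+1"] fiber_le by simp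
  finally have h: "q*q - 1 \<le> card ?Im * (q+1)" .
  have e: "q*q - 1 = (q - 1)*(q+1)" using q_pos by (simp add: algebra_simps diff_mult_distrib)
  have h2: "(q - 1)*(q+1) \<le> card ?Im * (q+1)" using h by (simp only: e)
  have "q - 1 \<le> card ?Im" using h2 by (simp only: mult_le_cancel2)
  with card_Fqs have "card ?Im = card Fqs" using card_mono[OF _ sub] by simp
  hence eq: "?Im = Fqs" using card_subset_eq[OF _ sub] by simp
  have "(-1::'a) \<in> Fqs" by (simp add: Fqs_def power_minus_odd)
  hence "(-1::'a) \<in> ?Im" using eq by simp
  thus ?thesis by (simp only: image_iff) (metis)
qed


lemma one_ne_m1: "(1::'a) \<noteq> -1"
proof
  assume "(1::'a) = -1"
  hence "(1::'a) + 1 = 0" by simp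
  thus False using two_ne0 by simp
qed

lemma K0_bound:
  assumes a0: "a0 \<in> subfield_m m" "a0 \<noteq> 0" and x0: "TR x0 \<noteq> 0"
  shows "3 * card {y \<in> subfield_m m. TR (a0*y) = 0} \<le> q"
proof -
  let ?F = "subfield_m m :: 'a set"
  let ?K = "{y \<in> ?F. TR (a0*y) = 0}"
  define z where "z = x0 + x0^q"
  have zF: "z \<in> ?F" unfolding z_def subfield_m_def by (simp add: frobk fermat_q)
  have "TR z = TR x0 + TR (x0^q)" unfolding z_def by (rule tr_add)
  also have "\<dots> = TR x0 + TR x0" by (simp only: tr_powq)
  also have "\<dots> = 2 * TR x0" by (simp only: mult_2)
  finally have "TR z = 2 * TR x0" .
  hence zn: "TR z \<noteq> 0" using x0 two_ne0 by simp
  define y1' where "y1' = z / a0"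
  have y1'F: "y1' \<in> ?F" unfolding y1'_def using Fq_div zF a0(1) by blast
  have "a0*y1' = z" unfolding y1'_def using a0(2) by simp
  hence ty1': "TR (a0*y1') = TR z" by simp
  define \<tau> where "\<tau> = TR z"
  have tF: "\<tau> \<in> F3" unfolding \<tau>_def by (rule tr_F3)
  have tn: "\<tau> \<noteq> 0" unfolding \<tau>_def by (rule zn)
  have tt: "\<tau> * \<tau> = 1" by (rule F3_sq[OF tF tn])
  define y1 where "y1 = \<tau> * y1'"
  have y1F: "y1 \<in> ?F" unfolding y1_def by (rule Fq_mult[OF F3_Fq[OF tF] y1'F])
  have ty1: "TR (a0*y1) = 1"
  proof -
    have "a0*y1 = \<tau> * (a0*y1')" unfolding y1_def by (simp add: ac_simps)
    hence "TR (a0*y1) = \<tau> * TR (a0*y1')" by (simp only: tr_scal[OF tF])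
    thus ?thesis using ty1' tt \<tau>_def by simp
  qed
  let ?A1 = "(\<lambda>y. y + y1) ` ?K"
  let ?A2 = "(\<lambda>y. y - y1) ` ?K"
  have A1: "?A1 \<subseteq> {y \<in> ?F. TR (a0*y) = 1}"
  proof
    fix x assume "x \<in> ?A1"
    then obtain y where y: "y \<in> ?K" "x = y + y1" by blast
    have "TR (a0*x) = TR (a0*y) + TR (a0*y1)" unfolding y(2) distrib_left tr_add ..
    moreover have "x \<in> ?F" using y y1F Fq_add by blast
    ultimately show "x \<in> {y \<in> ?F. TR (a0*y) = 1}" using y(1) ty1 by simp
  qed
  have A2: "?A2 \<subseteq> {y \<in> ?F. TR (a0*y) = -1}"
  proof
    fix x assume "x \<in> ?A2"
    then obtain y where y: "y \<in> ?K" "x = y - y1" by blast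
    have "TR (a0*x) = TR (a0*y) - TR (a0*y1)" unfolding y(2) right_diff_distrib tr_diff ..
    moreover have "x \<in> ?F" using y y1F Fq_add Fq_neg by (metis diff_conv_add_uminus mem_Collect_eq)
    ultimately show "x \<in> {y \<in> ?F. TR (a0*y) = -1}" using y(1) ty1 by simp
  qed
  have n1: "(1::'a) \<noteq> -1" by (rule one_ne_m1)
  have d1: "?K \<inter> ?A1 = {}"
  proof (rule ccontr)
    assume "?K \<inter> ?A1 \<noteq> {}"
    then obtain x where "x \<in> ?K" "x \<in> ?A1" by blast
    hence "TR (a0*x) = 0" "TR (a0*x) = 1" using A1 by auto
    thus False by simp
  qed
  have d2: "(?K \<union> ?A1) \<inter> ?A2 = {}"
  proof (rule ccontr)
    assume "(?K \<union> ?A1) \<inter> ?A2 \<noteq> {}"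
    then obtain x where x: "x \<in> ?K \<union> ?A1" "x \<in> ?A2" by blast
    hence "TR (a0*x) = -1" using A2 by auto
    moreover have "TR (a0*x) = 0 \<or> TR (a0*x) = 1" using x(1) A1 by auto
    ultimately show False using n1 by auto
  qed
  have c1: "card ?A1 = card ?K" by (rule card_image) (auto simp: inj_on_def)
  have c2: "card ?A2 = card ?K" by (rule card_image) (auto simp: inj_on_def)
  have "card (?K \<union> ?A1 \<union> ?A2) = card (?K \<union> ?A1) + card ?A2"
    by (rule card_Un_disjoint) (use d2 in auto)
  also have "card (?K \<union> ?A1) = card ?K + card ?A1"
    by (rule card_Un_disjoint) (use d1 in auto)
  finally have "card (?K \<union> ?A1 \<union> ?A2) = 3 * card ?K" using c1 c2 by simp
  moreover have "?K \<union> ?A1 \<union> ?A2 \<subseteq> ?F" using A1 A2 by blast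
  hence "card (?K \<union> ?A1 \<union> ?A2) \<le> card ?F" by (intro card_mono) auto
  ultimately show ?thesis using card_Fq by linarith
qed

lemma Z0_bound:
  assumes a0: "a0 \<in> subfield_m m" "a0 \<noteq> 0" and x0: "TR x0 \<noteq> 0"
  shows "3 * card {t. TR (a0*t^(q+1)) = 0} < q*q"
proof -
  let ?F = "subfield_m m :: 'a set"
  let ?K = "{y \<in> ?F. TR (a0*y) = 0}"
  have K3: "3 * card ?K \<le> q" by (rule K0_bound[OF a0 x0])
  have zK: "0 \<in> ?K" by (simp add: tr_zero subfield_m_def)
  have sub: "{t. TR (a0*t^(q+1)) = 0} \<subseteq> insert 0 (\<Union>y\<in>?K - {0}. {t. t^(q+1) = y})"
  proof
    fix t assume t: "t \<in> {t. TR (a0*t^(q+1)) = 0}"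
    show "t \<in> insert 0 (\<Union>y\<in>?K - {0}. {t. t^(q+1) = y})"
    proof (cases "t = 0")
      case False
      have "t^(q+1) \<noteq> 0" using False by simp
      hence "t^(q+1) \<in> ?K - {0}" using t norm_Fq[of t] by blast
      thus ?thesis by blast
    qed simp
  qed
  have "card {t. TR (a0*t^(q+1)) = 0} \<le> card (insert 0 (\<Union>y\<in>?K - {0}. {t::'a. t^(q+1) = y}))"
    by (rule card_mono[OF _ sub]) simp
  also have "\<dots> \<le> Suc (card (\<Union>y\<in>?K - {0}. {t::'a. t^(q+1) = y}))" by (simp add: card_insert_if)
  also have "card (\<Union>y\<in>?K - {0}. {t::'a. t^(q+1) = y}) \<le> (\<Sum>y\<in>?K - {0}. card {t::'a. t^(q+1) = y})"
    by (rule card_UN_le) simp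
  also have "\<dots> \<le> card (?K - {0}) * (q+1)"
    using sum_bounded_above[of "?K - {0}" "\<lambda>y. card {t::'a. t^(q+1) = y}" "q+1"] fiber_le by simp
  also have "card (?K - {0}) = card ?K - 1" using zK by (simp add: card_Diff_singleton)
  finally have Z: "card {t. TR (a0*t^(q+1)) = 0} \<le> Suc ((card ?K - 1) * (q+1))" by simp
  define k where "k = card ?K"
  have lt: "3 * Suc ((k - 1) * (q+1)) < q * q"
  proof -
    have "3*(k-1) \<le> q - 3" using K3 k_def by simp
    hence "3*(k-1)*(q+1) \<le> (q-3)*(q+1)" by (rule mult_right_mono) simp
    moreover have "3 + (q-3)*(q+1) < q*q"
    proof -
      define p where "p = q - 3"
      have p: "q = p + 3" using q_ge p_def by simp
      show ?thesis unfolding p by (simp add: algebra_simps)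
    qed
    ultimately show ?thesis by simp
  qed
  have "card {t. TR (a0*t^(q+1)) = 0} \<le> Suc ((k - 1) * (q+1))" using Z unfolding k_def .
  hence "3 * card {t. TR (a0*t^(q+1)) = 0} \<le> 3 * Suc ((k - 1) * (q+1))" by (rule mult_le_mono2)
  thus ?thesis using lt by (rule le_less_trans)
qed

lemma e_big:
  assumes a0: "a0 \<in> subfield_m m" "a0 \<noteq> 0" and x0: "TR x0 \<noteq> 0"
  shows "\<exists>e. (e = 1 \<or> e = -1) \<and> card {t. TR (a0*t^(q+1)) = 0} < card {t. TR (a0*t^(q+1)) = e}"
proof (rule ccontr)
  let ?Q = "\<lambda>t. TR (a0*t^(q+1))"
  assume "\<not> ?thesis"
  hence le: "card {t. ?Q t = 1} \<le> card {t. ?Q t = 0}" "card {t. ?Q t = -1} \<le> card {t. ?Q t = 0}"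
    by (auto simp: not_less)
  have n1: "(1::'a) \<noteq> -1" by (rule one_ne_m1)
  have U: "UNIV = {t. ?Q t = 0} \<union> {t. ?Q t = 1} \<union> {t. ?Q t = -1}"
    using tr_F3 by (auto simp: F3_iff)
  have "card (UNIV::'a set) = card ({t. ?Q t = 0} \<union> {t. ?Q t = 1} \<union> {t. ?Q t = -1})"
    using U by simp
  also have "\<dots> = card ({t. ?Q t = 0} \<union> {t. ?Q t = 1}) + card {t. ?Q t = -1}"
    by (rule card_Un_disjoint) (use n1 in auto)
  also have "card ({t. ?Q t = 0} \<union> {t. ?Q t = 1}) = card {t. ?Q t = 0} + card {t. ?Q t = 1}"
    by (rule card_Un_disjoint) auto
  finally have "q*q = card {t. ?Q t = 0} + card {t. ?Q t = 1} + card {t. ?Q t = -1}"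
    using cardA qq by simp
  thus False using le Z0_bound[OF a0 x0] by linarith
qed

end

context ff begin

lemma id4: "(X+Y)*(X+Y) + -1*((X-Y)*(X-Y)) = (X::'a)*Y"
proof -
  have "(X+Y)*(X+Y) + -1*((X-Y)*(X-Y)) = 4*(X*Y)" by algebra
  thus ?thesis by (simp add: four)
qed

lemma polar: assumes "\<forall>c. (\<lambda>t. TR(c*t) * TR(c*t)) \<in> S"
  shows "(\<lambda>t. TR(b*t) * TR(b'*t)) \<in> S"
proof -
  have "(\<lambda>t. TR((b+b')*t) * TR((b+b')*t) + -1 * (TR((b-b')*t) * TR((b-b')*t))) \<in> S"
    using assms F3_m1 by (intro S_lin) auto
  thus ?thesis
  proof (rule S_cong)
    fix t
    have "TR((b+b')*t) = TR(b*t) + TR(b'*t)" by (simp add: distrib_right tr_add)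
    moreover have "TR((b-b')*t) = TR(b*t) - TR(b'*t)" by (simp add: left_diff_distrib tr_diff)
    ultimately show "TR((b+b')*t) * TR((b+b')*t) + -1 * (TR((b-b')*t) * TR((b-b')*t)) = TR(b*t) * TR(b'*t)"
      using id4 by simp
  qed
qed

lemma hw_full: "hweight (\<lambda>t::'a. h) = (if h = 0 then 0 else card (UNIV::'a set))"
  by (simp add: hweight_def)

lemma case_a0_zero:
  assumes c0: "MW c0" "c0 \<noteq> (\<lambda>_. 0)" "\<forall>g\<in>CC. g \<noteq> (\<lambda>_. 0) \<longrightarrow> code_d CC \<le> hweight g"
    and c0e: "c0 = (\<lambda>t. TR (0 * t^(q+1) + b0*t) + h0)" and h0: "h0 \<in> F3"
    and x0: "TR x0 \<noteq> 0"
  shows "(\<lambda>t. TR(c*t) * TR(c*t)) \<in> S"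
proof -
  have c0e': "c0 = (\<lambda>t. TR (b0*t) + h0)" using c0e by simp
  have tx0: "TR x0 \<in> F3" by (rule tr_F3)
  have b0: "b0 \<noteq> 0"
  proof
    assume "b0 = 0"
    hence c0h: "c0 = (\<lambda>t. h0)" using c0e' tr_zero by simp
    hence "h0 \<noteq> 0" using c0(2) by auto
    hence hc0: "hweight c0 = card (UNIV::'a set)" unfolding c0h hweight_def by simp
    let ?g = "\<lambda>t::'a. TR (0 * t^(q+1) + 1*t) + 0"
    have gC: "?g \<in> CC" unfolding CC_iff
      by (rule exI[of _ 0], rule exI[of _ 1], rule exI[of _ 0]) (simp add: subfield_m_def F3_0)
    have gn: "?g \<noteq> (\<lambda>_. 0)"
    proof
      assume "?g = (\<lambda>_. 0)"
      hence "?g x0 = 0" by (rule fun_cong)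
      thus False using x0 by simp
    qed
    have "{t. ?g t \<noteq> 0} \<subset> UNIV" using tr_zero by auto
    hence "hweight ?g < card (UNIV::'a set)" unfolding hweight_def by (rule psubset_card_mono[OF finite])
    moreover have "code_d CC \<le> hweight ?g" using c0(3) gC gn by blast
    ultimately show False using hc0 c0(1) unfolding MW_def by simp
  qed
  show ?thesis
  proof (cases "c = 0")
    case True
    thus ?thesis using S_zero by (simp add: tr_zero)
  next
    case False
    define \<mu> where "\<mu> = -h0 * TR x0"
    have muF: "\<mu> \<in> F3" unfolding \<mu>_def using h0 tx0 F3_mult F3_neg by blast
    define l where "l = c / b0"
    define s where "s = \<mu> * x0 / b0"
    have l0: "l \<noteq> 0" using False b0 l_def by simp
    have mw: "MW (\<lambda>t. c0 (l*t+s))" by (rule MW_aff[OF c0(1) l0])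
    have eq: "\<And>t. c0 (l*t+s) = TR (c*t)"
    proof -
      fix t
      have "c0 (l*t+s) = TR (c*t) + TR (\<mu>*x0) + h0"
        unfolding c0e' l_def s_def using b0 by (simp add: distrib_left tr_add)
      also have "TR (\<mu>*x0) = \<mu> * TR x0" by (rule tr_scal[OF muF])
      also have "\<mu> * TR x0 = - h0 * (TR x0 * TR x0)" unfolding \<mu>_def by (simp add: ac_simps)
      also have "TR x0 * TR x0 = 1" by (rule F3_sq[OF tx0 x0])
      finally show "c0 (l*t+s) = TR (c*t)" by simp
    qed
    from MW_sq[OF mw] show ?thesis by (rule S_cong) (simp only: eq)
  qed
qed

end

context ff begin

lemma case_a0_nz:
  assumes c0: "MW c0" "\<forall>g\<in>CC. g \<noteq> (\<lambda>_. 0) \<longrightarrow> code_d CC \<le> hweight g"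
    and c0e: "c0 = (\<lambda>t. TR (a0 * t^(q+1) + b0*t) + h0)" and a0: "a0 \<in> subfield_m m" "a0 \<noteq> 0"
    and h0: "h0 \<in> F3" and x0: "TR x0 \<noteq> 0"
  shows "(\<lambda>t. TR(c*t) * TR(c*t)) \<in> S"
proof -
  define Q where "Q = (\<lambda>t. TR (a0 * t^(q+1)))"
  have Kq: "\<And>t s. Q (t+s) = Q t + TR (2*a0*s^q*t) + Q s"
  proof -
    fix t s
    show "Q (t+s) = Q t + TR (2*a0*s^q*t) + Q s"
      using K[OF a0(1), of 1 t s] unfolding Q_def by simp
  qed
  have QF: "\<And>t. Q t \<in> F3" unfolding Q_def by (rule tr_F3)
  have Q0: "Q 0 = 0" unfolding Q_def by (simp add: tr_zero)
  define s0 where "s0 = (-b0/(2*a0))^q"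
  have s0q: "s0^q = -b0/(2*a0)" unfolding s0_def by (rule fermat_q)
  have bb: "2*a0*s0^q = -b0" using a0(2) two_ne0 s0q by simp
  define e0 where "e0 = Q s0 + TR(b0*s0) + h0"
  have e0F: "e0 \<in> F3" unfolding e0_def using QF tr_F3 h0 F3_add by blast
  have c1eq: "\<And>t. c0 (1*t + s0) = Q t + e0"
  proof -
    fix t
    have "c0 (1*t+s0) = Q (t+s0) + TR(b0*t) + TR(b0*s0) + h0"
      unfolding c0e Q_def by (simp add: tr_add distrib_left)
    also have "Q (t+s0) = Q t + TR(2*a0*s0^q*t) + Q s0" by (rule Kq)
    also have "2*a0*s0^q*t = -(b0*t)" using bb by (metis minus_mult_left)
    also have "TR (-(b0*t)) = - TR (b0*t)" by (rule tr_neg)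
    finally show "c0 (1*t + s0) = Q t + e0" unfolding e0_def by simp
  qed
  have mw1: "MW (\<lambda>t. Q t + e0)"
  proof -
    have "MW (\<lambda>t. c0 (1*t+s0))" by (rule MW_aff[OF c0(1)]) simp
    moreover have "(\<lambda>t. c0 (1*t+s0)) = (\<lambda>t. Q t + e0)" by (rule ext) (rule c1eq)
    ultimately show ?thesis by simp
  qed
  have e0n: "e0 \<noteq> 0"
  proof
    assume e00: "e0 = 0"
    obtain e where e: "e = 1 \<or> e = -1" "card {t. Q t = 0} < card {t. Q t = e}"
      using e_big[OF a0 x0] unfolding Q_def by blast
    have eF: "e \<in> F3" "e \<noteq> 0" using e F3_1 F3_m1 by auto
    let ?g = "\<lambda>t. TR (a0 * t^(q+1) + 0*t) + (-e)"
    have gC: "?g \<in> CC" unfolding CC_iff using a0(1) F3_neg[OF eF(1)] by blast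
    have g0: "?g 0 = -e" by (simp add: tr_zero)
    have gn: "?g \<noteq> (\<lambda>_. 0)"
    proof
      assume "?g = (\<lambda>_. 0)"
      hence "?g 0 = 0" by (rule fun_cong)
      thus False using g0 eF by simp
    qed
    have fin: "finite {t::'a. Q t = e}" "finite {t::'a. Q t = 0}" by simp_all
    have "hweight ?g = card (UNIV - {t. Q t = e})"
      unfolding hweight_def Q_def by (rule arg_cong[where f=card]) auto
    also have "\<dots> = card (UNIV::'a set) - card {t. Q t = e}" by (rule card_Diff_subset) simp_all
    finally have hg: "hweight ?g = card (UNIV::'a set) - card {t. Q t = e}" .
    have "hweight (\<lambda>t. Q t + e0) = card (UNIV - {t. Q t = 0})"
      unfolding hweight_def e00 by (rule arg_cong[where f=card]) auto
    also have "\<dots> = card (UNIV::'a set) - card {t. Q t = 0}" by (rule card_Diff_subset) simp_all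
    finally have hq: "hweight (\<lambda>t. Q t + e0) = card (UNIV::'a set) - card {t. Q t = 0}" .
    have le: "card {t. Q t = e} \<le> card (UNIV::'a set)" by (rule card_mono) simp_all
    have "code_d CC \<le> hweight ?g" using c0(2) gC gn by blast
    moreover have "hweight (\<lambda>t. Q t + e0) = code_d CC" using mw1 unfolding MW_def by simp
    ultimately show False using hg hq le e(2) by linarith
  qed
  have e0sq: "e0 * e0 = 1" by (rule F3_sq[OF e0F e0n])
  obtain l1 where l1: "l1^(q+1) = (-1::'a)" using norm_neg1 by blast
  have l1n: "l1 \<noteq> 0"
  proof
    assume "l1 = 0"
    with l1 show False by simp
  qed
  have Qneg: "\<And>u. Q (l1*u) = - Q u"
  proof -
    fix u
    have "a0 * (l1*u)^(q+1) = -(a0 * u^(q+1))" by (simp only: power_mult_distrib l1) simp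
    thus "Q (l1*u) = - Q u" unfolding Q_def by (simp add: tr_neg)
  qed
  have ellneg: "\<And>s t. TR (2*a0*(-s)^q*t) = - TR (2*a0*s^q*t)"
  proof -
    fix s t
    have "2*a0*(-s)^q*t = -(2*a0*s^q*t)" by (simp add: negk)
    thus "TR (2*a0*(-s)^q*t) = - TR (2*a0*s^q*t)" by (simp add: tr_neg)
  qed
  have Qeven: "\<And>s. Q (-s) = Q s"
  proof -
    fix s
    show "Q (-s) = Q s" unfolding Q_def by (simp add: negk)
  qed
  have SA: "\<And>s. (\<lambda>t. (Q(t+s)+e0)*(Q(t+s)+e0)) \<in> S"
  proof -
    fix s
    have "MW (\<lambda>t. Q (1*t+s) + e0)" using MW_aff[OF mw1, of 1 s] by simp
    from MW_sq[OF this] show "(\<lambda>t. (Q(t+s)+e0)*(Q(t+s)+e0)) \<in> S" by simp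
  qed
  have SB: "\<And>s. (\<lambda>t. (Q(t+s)-e0)*(Q(t+s)-e0)) \<in> S"
  proof -
    fix s
    have "MW (\<lambda>t. Q (l1*t+l1*s) + e0)" using MW_aff[OF mw1 l1n, of "l1*s"] by simp
    from MW_sq[OF this] show "(\<lambda>t. (Q(t+s)-e0)*(Q(t+s)-e0)) \<in> S"
    proof (rule S_cong)
      fix t
      have "Q (l1*t+l1*s) = - Q (t+s)" using Qneg[of "t+s"] by (simp add: distrib_left)
      thus "(Q (l1*t+l1*s) + e0) * (Q (l1*t+l1*s) + e0) = (Q(t+s)-e0)*(Q(t+s)-e0)"
        by (simp add: algebra_simps)
    qed
  qed
  have SP: "\<And>s. (\<lambda>t. Q(t+s)) \<in> S"
  proof -
    fix s
    have "(\<lambda>t. e0 * ((Q(t+s)+e0)*(Q(t+s)+e0) + -1 * ((Q(t+s)-e0)*(Q(t+s)-e0)))) \<in> S"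
      by (rule S_scal[OF S_lin[OF SA SB F3_m1] e0F])
    thus "(\<lambda>t. Q(t+s)) \<in> S"
    proof (rule S_cong)
      fix t
      have "e0 * ((Q(t+s)+e0)*(Q(t+s)+e0) + -1 * ((Q(t+s)-e0)*(Q(t+s)-e0))) = 4 * (e0*e0) * Q(t+s)"
        by algebra
      thus "e0 * ((Q(t+s)+e0)*(Q(t+s)+e0) + -1 * ((Q(t+s)-e0)*(Q(t+s)-e0))) = Q(t+s)"
        by (simp add: four e0sq)
    qed
  qed
  obtain s1 where s1: "Q s1 \<noteq> 0"
  proof -
    obtain e where e: "e = 1 \<or> e = -1" "card {t. Q t = 0} < card {t. Q t = e}"
      using e_big[OF a0 x0] unfolding Q_def by blast
    have "card {t. Q t = e} > 0" using e(2) by linarith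
    hence "{t. Q t = e} \<noteq> {}" by (metis card.empty less_irrefl)
    then obtain t where "Q t = e" by auto
    moreover have "e \<noteq> 0" using e(1) by auto
    ultimately show ?thesis using that by auto
  qed
  define \<kappa> where "\<kappa> = Q s1"
  have kF: "\<kappa> \<in> F3" unfolding \<kappa>_def by (rule QF)
  have kk: "\<kappa> * \<kappa> = 1" using F3_sq[OF kF] s1 \<kappa>_def by simp
  have S1: "(\<lambda>t. 1) \<in> S"
  proof -
    have "(\<lambda>t. (-\<kappa>) * ((Q(t+s1) + 1 * Q(t+(-s1))) + 1 * Q(t+0))) \<in> S"
      by (rule S_scal[OF S_lin[OF S_lin[OF SP SP F3_1] SP F3_1] F3_neg[OF kF]])
    thus ?thesis
    proof (rule S_cong)
      fix t
      let ?X = "Q t" and ?L = "TR (2*a0*s1^q*t)"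
      have a: "Q(t+s1) = ?X + ?L + \<kappa>" using Kq \<kappa>_def by simp
      have b: "Q(t+(-s1)) = ?X + - ?L + \<kappa>" using Kq[of t "-s1"] ellneg[of s1 t] Qeven[of s1] \<kappa>_def by simp
      have "(-\<kappa>) * ((?X + ?L + \<kappa> + 1 * (?X + - ?L + \<kappa>)) + 1 * ?X) = - (3 * (\<kappa> * ?X)) + (-2) * (\<kappa> * \<kappa>)"
        by algebra
      hence "(-\<kappa>) * ((?X + ?L + \<kappa> + 1 * (?X + - ?L + \<kappa>)) + 1 * ?X) = 1"
        by (simp add: three0 mtwo kk)
      thus "(-\<kappa>) * ((Q(t+s1) + 1 * Q(t+(-s1))) + 1 * Q(t+0)) = 1" using a b by simp
    qed
  qed
  have SPsq: "\<And>s. (\<lambda>t. Q(t+s) * Q(t+s)) \<in> S"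
  proof -
    fix s
    have "(\<lambda>t. ((Q(t+s)+e0)*(Q(t+s)+e0) + e0 * Q(t+s)) + -1 * 1) \<in> S"
      by (rule S_lin[OF S_lin[OF SA SP e0F] S1 F3_m1])
    thus "(\<lambda>t. Q(t+s) * Q(t+s)) \<in> S"
    proof (rule S_cong)
      fix t
      have "((Q(t+s)+e0)*(Q(t+s)+e0) + e0 * Q(t+s)) + -1 * 1 = Q(t+s) * Q(t+s) + 3*(e0*Q(t+s)) + (e0*e0 - 1)"
        by algebra
      thus "((Q(t+s)+e0)*(Q(t+s)+e0) + e0 * Q(t+s)) + -1 * 1 = Q(t+s) * Q(t+s)"
        by (simp add: three0 e0sq)
    qed
  qed
  have Sell: "\<And>s. (\<lambda>t. TR (2*a0*s^q*t) * TR (2*a0*s^q*t)) \<in> S"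
  proof -
    fix s
    define K where "K = Q s"
    have KF: "K \<in> F3" unfolding K_def by (rule QF)
    have KK: "-(K*K) \<in> F3" using KF F3_mult F3_neg by blast
    have "(\<lambda>t. (((-1 * (Q(t+s)*Q(t+s)) + -1 * (Q(t+(-s))*Q(t+(-s)))) + -1 * (Q(t+0)*Q(t+0))) + K * Q(t+0)) + (-(K*K)) * 1) \<in> S"
      by (rule S_lin[OF S_lin[OF S_lin[OF S_lin[OF S_scal[OF SPsq F3_m1] SPsq F3_m1] SPsq F3_m1] SP KF] S1 KK])
    thus "(\<lambda>t. TR (2*a0*s^q*t) * TR (2*a0*s^q*t)) \<in> S"
    proof (rule S_cong)
      fix t
      let ?X = "Q t" and ?L = "TR (2*a0*s^q*t)"
      have a: "Q(t+s) = ?X + ?L + K" using Kq K_def by simp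
      have b: "Q(t+(-s)) = ?X + - ?L + K" using Kq[of t "-s"] ellneg[of s t] Qeven[of s] K_def by simp
      have "(((-1 * ((?X + ?L + K)*(?X + ?L + K)) + -1 * ((?X + - ?L + K)*(?X + - ?L + K))) + -1 * (?X*?X)) + K * ?X) + (-(K*K)) * 1
            = ?L * ?L - 3 * (?X*?X + ?X*K + K*K + ?L*?L)"
        by algebra
      hence "(((-1 * ((?X + ?L + K)*(?X + ?L + K)) + -1 * ((?X + - ?L + K)*(?X + - ?L + K))) + -1 * (?X*?X)) + K * ?X) + (-(K*K)) * 1
            = ?L * ?L" by (simp add: three0)
      thus "(((-1 * (Q(t+s)*Q(t+s)) + -1 * (Q(t+(-s))*Q(t+(-s)))) + -1 * (Q(t+0)*Q(t+0))) + K * Q(t+0)) + (-(K*K)) * 1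
            = ?L * ?L" using a b by simp
    qed
  qed
  define s where "s = (c/(2*a0))^q"
  have "s^q = c/(2*a0)" unfolding s_def by (rule fermat_q)
  hence sc: "2*a0*s^q = c" using a0(2) two_ne0 by simp
  show ?thesis using Sell[of s] unfolding sc .
qed

end

context ff begin

lemma main: "(\<lambda>t. TR(b*t) * TR(b'*t)) \<in> S"
proof (cases "\<exists>x. TR x \<noteq> 0")
  case False
  hence "\<And>x. TR x = 0" by blast
  from S_zero show ?thesis by (rule S_cong) (simp add: \<open>\<And>x. TR x = 0\<close>)
next
  case True
  then obtain x0 where x0: "TR x0 \<noteq> 0" by blast
  obtain c0 where c0: "MW c0" "c0 \<noteq> (\<lambda>_. 0)" "\<forall>g\<in>CC. g \<noteq> (\<lambda>_. 0) \<longrightarrow> code_d CC \<le> hweight g"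
    using min_exists by blast
  obtain a0 b0 h0 where c0e: "c0 = (\<lambda>t. TR (a0 * t^(q+1) + b0*t) + h0)" and a0: "a0 \<in> subfield_m m" and h0: "h0 \<in> F3"
    using c0(1) unfolding MW_def CC_iff by blast
  have "\<forall>c. (\<lambda>t. TR(c*t) * TR(c*t)) \<in> S"
  proof
    fix c
    show "(\<lambda>t. TR(c*t) * TR(c*t)) \<in> S"
    proof (cases "a0 = 0")
      case True
      have c0e': "c0 = (\<lambda>t. TR (0 * t^(q+1) + b0*t) + h0)" using c0e True by simp
      show ?thesis by (rule case_a0_zero[OF c0 c0e' h0 x0])
    next
      case False
      show ?thesis by (rule case_a0_nz[OF c0(1) c0(3) c0e a0 False h0 x0])
    qed
  qed
  thus ?thesis by (rule polar)
qed

end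

theorem lemma3p7:
  fixes m :: nat and b b' :: "'a::{field,finite}"
  assumes "m \<ge> 2" and "card (UNIV :: 'a set) = 3 ^ (2 * m)"
  shows "(\<lambda>t. tr (2*m) (b * t) * tr (2*m) (b' * t)) \<in> code_of_design (blocks_D m :: 'a set set)"
proof -
  interpret ff m "TYPE('a)" using assms by unfold_locales
  show ?thesis by (rule main)
qed


end
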